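(* Consider logical Bell-state measurements on two logical qubits $a,b$ encoded jointly (by a single encoder having access to both input states) into a set of physical qubits, each physical qubit being independently lost with probability $\varepsilon$. The logical Bell-state-measurement loss-tolerance threshold $\varepsilon^{(BSM)}$ of a family of such codes is at most $1$, and this bound is attained: there exists a family $\mathcal{C}$ of such two-logical-qubit codes (with $2n$ physical qubits, $n\ge 1$) such that for every $\varepsilon<1$ and every $\varepsilon'>0$ there is $C\in\mathcal{C}$ for which the logical Bell-state measurement succeeds with probability greater than $1-\varepsilon'$; i.e. $\varepsilon^{(BSM)}=1$ for this family.
   Context: A logical Bell-state measurement (BSM) on two logical qubits $a,b$ encoded by a code $C$ is the joint measurement of the two commuting logical operators $X_{aC}X_{bC}$ and $Z_{aC}Z_{bC}$, where $X,Z$ denote Pauli operators and the subscript $C$ denotes the logical operator on the code space; it succeeds if both outcomes are correctly obtained. The four Bell states are $|\Phi^\pm\rangle=(|00\rangle\pm|11\rangle)/\sqrt2$ and $|\Psi^\pm\rangle=(|01\rangle\pm|10\rangle)/\sqrt2$. A family $\mathcal{C}$ of codes has logical BSM loss threshold $\varepsilon^{(BSM)}$ equal to the supremum of values $e$ such that for every $\varepsilon<e$ and every $\varepsilon'>0$ there exists $C\in\mathcal{C}$ whose logical BSM (performed by any physically allowed measurement on the surviving physical qubits) succeeds with probability $>1-\varepsilon'$ when each physical qubit is independently lost with probability $\varepsilon$. *)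

theory Defs
  imports Complex_Main
begin

text \<open>Physical states of m qubits are amplitude functions on computational-basis
configurations.  A configuration on a set A of qubit indices is a function
nat => bool that is False outside A.\<close>

definition cfg :: "nat set \<Rightarrow> (nat \<Rightarrow> bool) set" where
  "cfg A = {x. \<forall>i. x i \<longrightarrow> i \<in> A}"

definition glue :: "(nat \<Rightarrow> bool) \<Rightarrow> (nat \<Rightarrow> bool) \<Rightarrow> (nat \<Rightarrow> bool)" where
  "glue y z = (\<lambda>i. y i \<or> z i)"

text \<open>A two-logical-qubit code on m physical qubits: number of physical qubits and an
isometric encoder from the logical basis |ab> (a,b :: bool) into the m-qubit space.\<close>
type_synonym code = "nat \<times> (bool \<times> bool \<Rightarrow> (nat \<Rightarrow> bool) \<Rightarrow> complex)"

definition is_code :: "code \<Rightarrow> bool" where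
  "is_code C \<longleftrightarrow> (let m = fst C; enc = snd C in
     (\<forall>l x. x \<notin> cfg {..<m} \<longrightarrow> enc l x = 0) \<and>
     (\<forall>l l'. (\<Sum>x\<in>cfg {..<m}. cnj (enc l x) * enc l' x) = (if l = l' then 1 else 0)))"

text \<open>Bell states, labelled by (z,x): z = True iff Psi (ZZ = -1), x = True iff minus
sign (XX = -1). So (F,F)=Phi+, (F,T)=Phi-, (T,F)=Psi+, (T,T)=Psi-.\<close>
definition bell :: "bool \<times> bool \<Rightarrow> bool \<times> bool \<Rightarrow> complex" where
  "bell k ab = (if (fst ab \<noteq> snd ab) = fst k
                then (if snd k \<and> fst ab then -1 else 1) / complex_of_real (sqrt 2)
                else 0)"

definition enc_bell :: "code \<Rightarrow> bool \<times> bool \<Rightarrow> (nat \<Rightarrow> bool) \<Rightarrow> complex" where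
  "enc_bell C k x = (\<Sum>ab\<in>UNIV. bell k ab * snd C ab x)"

text \<open>Reduced density matrix of the encoded Bell state k on the surviving set S
(partial trace over the lost qubits {..<m} - S).\<close>
definition reduced :: "code \<Rightarrow> bool \<times> bool \<Rightarrow> nat set \<Rightarrow>
    (nat \<Rightarrow> bool) \<Rightarrow> (nat \<Rightarrow> bool) \<Rightarrow> complex" where
  "reduced C k S y y' = (\<Sum>z\<in>cfg ({..<fst C} - S).
      enc_bell C k (glue y z) * cnj (enc_bell C k (glue y' z)))"

definition psd_on :: "nat set \<Rightarrow> ((nat \<Rightarrow> bool) \<Rightarrow> (nat \<Rightarrow> bool) \<Rightarrow> complex) \<Rightarrow> bool" where
  "psd_on S M \<longleftrightarrow> (\<forall>v. let q = (\<Sum>x\<in>cfg S. \<Sum>y\<in>cfg S. cnj (v x) * M x y * v y)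
                          in Im q = 0 \<and> Re q \<ge> 0)"

text \<open>A POVM on the qubits in S with outcomes labelled by the four Bell labels
(the most general physically allowed measurement).\<close>
definition povm_on :: "nat set \<Rightarrow> (bool \<times> bool \<Rightarrow> (nat \<Rightarrow> bool) \<Rightarrow> (nat \<Rightarrow> bool) \<Rightarrow> complex) \<Rightarrow> bool" where
  "povm_on S M \<longleftrightarrow> (\<forall>k. psd_on S (M k)) \<and>
     (\<forall>x\<in>cfg S. \<forall>y\<in>cfg S. (\<Sum>k\<in>UNIV. M k x y) = (if x = y then 1 else 0))"

definition outcome_prob :: "nat set \<Rightarrow> ((nat \<Rightarrow> bool) \<Rightarrow> (nat \<Rightarrow> bool) \<Rightarrow> complex) \<Rightarrow>
    ((nat \<Rightarrow> bool) \<Rightarrow> (nat \<Rightarrow> bool) \<Rightarrow> complex) \<Rightarrow> real" where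
  "outcome_prob S M rho = Re (\<Sum>x\<in>cfg S. \<Sum>y\<in>cfg S. M x y * rho y x)"

definition loss_prob :: "nat \<Rightarrow> real \<Rightarrow> nat set \<Rightarrow> real" where
  "loss_prob m eps S = (1 - eps) ^ card S * eps ^ (m - card S)"

definition bsm_succeeds_gt :: "code \<Rightarrow> real \<Rightarrow> real \<Rightarrow> bool" where
  "bsm_succeeds_gt C eps p \<longleftrightarrow> (\<exists>M. (\<forall>S\<subseteq>{..<fst C}. povm_on S (M S)) \<and>
     (\<forall>k. (\<Sum>S\<in>Pow {..<fst C}. loss_prob (fst C) eps S *
            outcome_prob S (M S k) (reduced C k S)) > p))"

definition bsm_threshold :: "code set \<Rightarrow> real" where
  "bsm_threshold F = Sup {e. \<forall>eps. 0 \<le> eps \<and> eps \<le> 1 \<and> eps < e \<longrightarrow>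
       (\<forall>eps'>0. \<exists>C\<in>F. bsm_succeeds_gt C eps (1 - eps'))}"

end

theory Submission
  imports Defs
begin

lemma finite_cfg: "finite A \<Longrightarrow> finite (cfg A)"
proof -
  assume f: "finite A"
  have "cfg A \<subseteq> (\<lambda>B i. i \<in> B) ` Pow A"
  proof
    fix x assume "x \<in> cfg A"
    then have "{i. x i} \<in> Pow A" by (auto simp: cfg_def)
    moreover have "x = (\<lambda>i. i \<in> {i. x i})" by auto
    ultimately show "x \<in> (\<lambda>B i. i \<in> B) ` Pow A" by blast
  qed
  then show ?thesis using f by (meson finite_Pow_iff finite_imageI finite_subset)
qed

lemma binom_pow:
  fixes e :: real
  assumes "finite A"
  shows "(\<Sum>S\<in>Pow A. (1-e)^card S * e^(card A - card S)) = 1"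
proof -
  have "(\<Prod>x\<in>A. (1-e) + e) = (\<Sum>X\<in>Pow A. (\<Prod>x\<in>X. (1-e)) * (\<Prod>x\<in>A-X. e))"
    by (rule prod_add[OF assms])
  also have "\<dots> = (\<Sum>S\<in>Pow A. (1-e)^card S * e^(card A - card S))"
  proof (rule sum.cong)
    fix X assume "X \<in> Pow A"
    then have "card (A - X) = card A - card X" using assms
      by (simp add: card_Diff_subset finite_subset)
    then show "(\<Prod>x\<in>X. (1-e)) * (\<Prod>x\<in>A-X. e) = (1-e)^card X * e^(card A - card X)" by simp
  qed simp
  finally show ?thesis by simp
qed

lemma cfg_empty: "cfg {} = {\<lambda>_. False}"
  by (auto simp: cfg_def)

lemma bell_cnj: "cnj (bell k ab) = bell k ab"
  by (simp add: bell_def)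

lemma UNIV_bb: "(UNIV :: (bool \<times> bool) set) = {(False,False),(False,True),(True,False),(True,True)}"
  by auto

lemma s2: "complex_of_real (sqrt 2) * complex_of_real (sqrt 2) = 2"
  by (simp flip: of_real_mult)

lemma bell_orth: "(\<Sum>ab\<in>UNIV. bell k ab * bell k' ab) = (if k = k' then 1 else 0)"
  apply (cases k; cases k')
  apply (auto simp: bell_def UNIV_bb field_simps s2)
  done

lemma bell_norm: "(\<Sum>ab\<in>UNIV. bell k ab * cnj (bell k ab)) = 1"
  using bell_orth[of k k] by (simp add: bell_cnj)

lemma glue_false: "glue (\<lambda>_. False) z = z"
  by (simp add: glue_def)

lemma enc_norm:
  assumes "is_code C"
  shows "(\<Sum>z\<in>cfg {..<fst C}. enc_bell C k z * cnj (enc_bell C k z)) = 1"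
proof -
  define U where "U = cfg {..<fst C}"
  define e where "e = snd C"
  have orth: "\<And>l l'. (\<Sum>x\<in>U. cnj (e l x) * e l' x) = (if l = l' then 1 else 0)"
    using assms unfolding is_code_def U_def e_def Let_def by blast
  have "(\<Sum>z\<in>U. enc_bell C k z * cnj (enc_bell C k z))
      = (\<Sum>z\<in>U. \<Sum>ab\<in>UNIV. \<Sum>ab'\<in>UNIV. (cnj (bell k ab) * bell k ab') * (cnj (e ab z) * e ab' z))"
    unfolding enc_bell_def e_def
    by (simp add: sum_distrib_left sum_distrib_right cnj_sum mult_ac)
  also have "\<dots> = (\<Sum>ab\<in>UNIV. \<Sum>ab'\<in>UNIV. (cnj (bell k ab) * bell k ab') * (\<Sum>z\<in>U. cnj (e ab z) * e ab' z))"
    by (simp add: sum_distrib_left sum.swap[of _ U])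
  also have "\<dots> = (\<Sum>ab\<in>UNIV. \<Sum>ab'\<in>UNIV. (if ab = ab' then cnj (bell k ab) * bell k ab' else 0))"
    by (simp add: orth if_distrib cong: if_cong)
  also have "\<dots> = (\<Sum>ab\<in>UNIV. cnj (bell k ab) * bell k ab)"
    by simp
  also have "\<dots> = 1" using bell_norm[of k] by (simp add: mult.commute)
  finally show ?thesis unfolding U_def .
qed

lemma reduced_empty:
  assumes "is_code C"
  shows "reduced C k {} (\<lambda>_. False) (\<lambda>_. False) = 1"
  unfolding reduced_def glue_false using enc_norm[OF assms] by simp

lemma loss_prob_one:
  assumes "S \<in> Pow {..<m}"
  shows "loss_prob m 1 S = (if S = {} then 1 else 0)"
proof -
  have "finite S" using assms finite_subset by auto
  then show ?thesis using assms by (auto simp: loss_prob_def card_gt_0_iff)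
qed

lemma not_succ_one:
  assumes "is_code C"
  shows "\<not> bsm_succeeds_gt C 1 (1/2)"
proof
  assume "bsm_succeeds_gt C 1 (1/2)"
  then obtain M where pv: "\<forall>S\<subseteq>{..<fst C}. povm_on S (M S)"
    and gt: "\<And>k. (\<Sum>S\<in>Pow {..<fst C}. loss_prob (fst C) 1 S *
            outcome_prob S (M S k) (reduced C k S)) > 1/2"
    unfolding bsm_succeeds_gt_def by blast
  define x0 :: "nat \<Rightarrow> bool" where "x0 = (\<lambda>_. False)"
  have "\<And>k. (\<Sum>S\<in>Pow {..<fst C}. loss_prob (fst C) 1 S *
            outcome_prob S (M S k) (reduced C k S)) = outcome_prob {} (M {} k) (reduced C k {})"
  proof -
    fix k
    have "(\<Sum>S\<in>Pow {..<fst C}. loss_prob (fst C) 1 S *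
            outcome_prob S (M S k) (reduced C k S)) = (\<Sum>S\<in>Pow {..<fst C}. if S = {} then 
            outcome_prob S (M S k) (reduced C k S) else 0)"
      by (rule sum.cong) (auto simp: loss_prob_one)
    also have "\<dots> = outcome_prob {} (M {} k) (reduced C k {})"
      by (simp add: sum.delta)
    finally show "?thesis k" .
  qed
  also have "\<And>k. outcome_prob {} (M {} k) (reduced C k {}) = Re (M {} k x0 x0)"
    unfolding outcome_prob_def cfg_empty x0_def using reduced_empty[OF assms] by simp
  finally have gt2: "\<And>k. Re (M {} k x0 x0) > 1/2" using gt by metis
  have "povm_on {} (M {})" using pv by simp
  then have "(\<Sum>k\<in>UNIV. M {} k x0 x0) = 1"
    unfolding povm_on_def cfg_empty x0_def by simp
  then have "(\<Sum>k\<in>UNIV. Re (M {} k x0 x0)) = 1"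
    by (metis Re_sum one_complex.sel(1))
  moreover have "(\<Sum>k\<in>(UNIV::(bool\<times>bool) set). Re (M {} k x0 x0)) > (\<Sum>k\<in>(UNIV::(bool\<times>bool) set). 1/2)"
    using gt2 by (intro sum_strict_mono) auto
  moreover have "(\<Sum>k\<in>(UNIV::(bool\<times>bool) set). (1/2::real)) = 2"
    by (simp add: UNIV_bb)
  ultimately show False by simp
qed

lemma E_bound:
  assumes "\<forall>C\<in>F. is_code C"
    and "e \<in> {e. \<forall>eps. 0 \<le> eps \<and> eps \<le> 1 \<and> eps < e \<longrightarrow>
       (\<forall>eps'>0. \<exists>C\<in>F. bsm_succeeds_gt C eps (1 - eps'))}"
  shows "e \<le> 1"
proof -
  have h: "\<forall>eps. 0 \<le> eps \<and> eps \<le> 1 \<and> eps < e \<longrightarrow>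
       (\<forall>eps'>0. \<exists>C\<in>F. bsm_succeeds_gt C eps (1 - eps'))" using assms(2) by simp
  show "e \<le> 1"
  proof (rule ccontr)
    assume "\<not> e \<le> 1"
    then obtain C where "C \<in> F" "bsm_succeeds_gt C 1 (1 - 1/2)"
      using h[rule_format, of 1 "1/2"] by auto
    moreover have "(1::real) - 1/2 = 1/2" by simp
    ultimately show False using not_succ_one assms by metis
  qed
qed

lemma part1:
  assumes "\<forall>C\<in>F. is_code C"
  shows "bsm_threshold F \<le> 1"
  unfolding bsm_threshold_def
proof (rule cSup_least)
  show "{e. \<forall>eps. 0 \<le> eps \<and> eps \<le> 1 \<and> eps < e \<longrightarrow>
       (\<forall>eps'>0. \<exists>C\<in>F. bsm_succeeds_gt C eps (1 - eps'))} \<noteq> {}"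
    unfolding ex_in_conv[symmetric] by (rule exI[of _ 0]) auto
qed (rule E_bound[OF assms])

definition word :: "nat \<Rightarrow> bool \<times> bool \<Rightarrow> nat \<Rightarrow> bool" where
  "word n k = (\<lambda>i. (i < n \<and> fst k) \<or> (n \<le> i \<and> i < 2*n \<and> snd k))"

definition encf :: "nat \<Rightarrow> bool \<times> bool \<Rightarrow> (nat \<Rightarrow> bool) \<Rightarrow> complex" where
  "encf n l x = (\<Sum>k\<in>UNIV. if x = word n k then bell k l else 0)"

definition code :: "nat \<Rightarrow> code" where
  "code n = (2*n, encf n)"

lemma word_cfg: "word n k \<in> cfg {..<2*n}"
  by (auto simp: word_def cfg_def)

lemma word_inj: "n \<ge> 1 \<Longrightarrow> (word n k = word n k') = (k = k')"
proof
  assume n: "n \<ge> 1" and e: "word n k = word n k'"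
  have "word n k 0 = word n k' 0" "word n k n = word n k' n" using e by auto
  then show "k = k'" using n by (cases k; cases k') (auto simp: word_def)
qed simp

lemma encf_word: "n \<ge> 1 \<Longrightarrow> encf n l (word n k) = bell k l"
  unfolding encf_def by (simp add: word_inj eq_commute[of k])

lemma encf_out: "x \<notin> range (word n) \<Longrightarrow> encf n l x = 0"
  unfolding encf_def by (rule sum.neutral) auto

lemma bell_orth2: "(\<Sum>k\<in>UNIV. cnj (bell k l) * bell k l') = (if l = l' then 1 else 0)"
  apply (cases l; cases l')
  apply (auto simp: bell_def UNIV_bb field_simps s2)
  done

lemma is_code_code:
  assumes n: "n \<ge> 1"
  shows "is_code (code n)"
  unfolding is_code_def Let_def code_def fst_conv snd_conv
proof (intro conjI allI impI)
  fix l x assume "x \<notin> cfg {..<2*n}"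
  then have "x \<notin> range (word n)" using word_cfg by auto
  then show "encf n l x = 0" by (rule encf_out)
next
  fix l l'
  have "(\<Sum>x\<in>cfg {..<2*n}. cnj (encf n l x) * encf n l' x) = (\<Sum>x\<in>range (word n). cnj (encf n l x) * encf n l' x)"
    by (rule sum.mono_neutral_right) (auto simp: finite_cfg word_cfg encf_out)
  also have "\<dots> = (\<Sum>k\<in>UNIV. cnj (encf n l (word n k)) * encf n l' (word n k))"
    by (rule sum.reindex_cong[where l="word n"]) (auto simp: inj_def word_inj[OF n])
  also have "\<dots> = (\<Sum>k\<in>UNIV. cnj (bell k l) * bell k l')"
    by (simp add: encf_word[OF n])
  finally show "(\<Sum>x\<in>cfg {..<2*n}. cnj (encf n l x) * encf n l' x) = (if l = l' then 1 else 0)"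
    by (simp add: bell_orth2)
qed

lemma enc_bell_code:
  assumes n: "n \<ge> 1"
  shows "enc_bell (code n) k x = (if x = word n k then 1 else 0)"
proof (cases "x \<in> range (word n)")
  case True
  then obtain k' where x: "x = word n k'" by auto
  have "enc_bell (code n) k x = (\<Sum>ab\<in>UNIV. bell k ab * bell k' ab)"
    unfolding enc_bell_def code_def x by (simp add: encf_word[OF n])
  then show ?thesis by (simp add: bell_orth x word_inj[OF n] eq_commute)
next
  case False
  then show ?thesis unfolding enc_bell_def code_def by (auto simp: encf_out)
qed

definition dec :: "nat \<Rightarrow> (nat \<Rightarrow> bool) \<Rightarrow> bool \<times> bool" where
  "dec n y = ((\<exists>i<n. y i), (\<exists>i. n \<le> i \<and> y i))"

definition Mst :: "nat \<Rightarrow> bool \<times> bool \<Rightarrow> (nat \<Rightarrow> bool) \<Rightarrow> (nat \<Rightarrow> bool) \<Rightarrow> complex" where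
  "Mst n k x y = (if x = y \<and> dec n x = k then 1 else 0)"

definition restr :: "nat set \<Rightarrow> (nat \<Rightarrow> bool) \<Rightarrow> (nat \<Rightarrow> bool)" where
  "restr S w = (\<lambda>i. i \<in> S \<and> w i)"

lemma povm_Mst:
  assumes "finite S"
  shows "povm_on S (Mst n)"
  unfolding povm_on_def
proof (intro conjI allI ballI)
  fix k
  show "psd_on S (Mst n k)"
    unfolding psd_on_def Let_def
  proof
    fix v :: "(nat \<Rightarrow> bool) \<Rightarrow> complex"
    have "(\<Sum>x\<in>cfg S. \<Sum>y\<in>cfg S. cnj (v x) * Mst n k x y * v y)
       = (\<Sum>x\<in>cfg S. complex_of_real (if dec n x = k then (cmod (v x))^2 else 0))"
    proof (rule sum.cong)
      fix x assume x: "x \<in> cfg S"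
      have "(\<Sum>y\<in>cfg S. cnj (v x) * Mst n k x y * v y) = (\<Sum>y\<in>cfg S. if x = y then (if dec n x = k then cnj (v x) * v x else 0) else 0)"
        by (rule sum.cong) (auto simp: Mst_def)
      also have "\<dots> = (if dec n x = k then cnj (v x) * v x else 0)"
        using x by (simp add: sum.delta finite_cfg[OF assms])
      also have "\<dots> = complex_of_real (if dec n x = k then (cmod (v x))^2 else 0)"
        by (simp add: complex_norm_square mult.commute del: of_real_power)
      finally show "(\<Sum>y\<in>cfg S. cnj (v x) * Mst n k x y * v y) = complex_of_real (if dec n x = k then (cmod (v x))^2 else 0)" .
    qed simp
    also have "\<dots> = complex_of_real (\<Sum>x\<in>cfg S. if dec n x = k then (cmod (v x))^2 else 0)"
      by simp
    finally have eq: "(\<Sum>x\<in>cfg S. \<Sum>y\<in>cfg S. cnj (v x) * Mst n k x y * v y) = complex_of_real (\<Sum>x\<in>cfg S. if dec n x = k then (cmod (v x))^2 else 0)" .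
    have "(\<Sum>x\<in>cfg S. if dec n x = k then (cmod (v x))^2 else 0) \<ge> 0"
      by (rule sum_nonneg) auto
    then show "Im (\<Sum>x\<in>cfg S. \<Sum>y\<in>cfg S. cnj (v x) * Mst n k x y * v y) = 0 \<and>
          0 \<le> Re (\<Sum>x\<in>cfg S. \<Sum>y\<in>cfg S. cnj (v x) * Mst n k x y * v y)"
      unfolding eq by simp
  qed
next
  fix x y
  show "(\<Sum>k\<in>UNIV. Mst n k x y) = (if x = y then 1 else 0)"
    unfolding Mst_def by (cases "x = y") (auto simp: eq_commute[of "dec n x"])
qed

lemma glue_iff:
  assumes "x \<in> cfg S" "z \<in> cfg (U - S)" "w \<in> cfg U"
  shows "(glue x z = w) = (x = restr S w \<and> z = restr (U - S) w)"
  using assms unfolding glue_def restr_def cfg_def fun_eq_iff by blast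

lemma outcome_code:
  assumes n: "n \<ge> 1" and S: "S \<subseteq> {..<2*n}"
  shows "outcome_prob S (Mst n k) (reduced (code n) k S) = (if dec n (restr S (word n k)) = k then 1 else 0)"
proof -
  define U where "U = {..<2*n}"
  define w where "w = word n k"
  have fS: "finite S" using S finite_subset by auto
  have fU: "finite (U - S)" unfolding U_def by simp
  have wU: "w \<in> cfg U" unfolding w_def U_def by (rule word_cfg)
  have rS: "restr S w \<in> cfg S" and rU: "restr (U - S) w \<in> cfg (U - S)"
    by (auto simp: restr_def cfg_def)
  have rho: "reduced (code n) k S x x = (if x = restr S w then 1 else 0)" if x: "x \<in> cfg S" for x
  proof -
    have "reduced (code n) k S x x = (\<Sum>z\<in>cfg (U - S). if z = restr (U - S) w then (if x = restr S w then 1 else 0) else 0)"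
      unfolding reduced_def enc_bell_code[OF n]
      by (rule sum.cong) (auto simp: code_def U_def w_def[symmetric] glue_iff[OF x _ wU])
    also have "\<dots> = (if x = restr S w then 1 else 0)"
      using rU by (simp add: sum.delta finite_cfg[OF fU])
    finally show ?thesis .
  qed
  have "(\<Sum>x\<in>cfg S. \<Sum>y\<in>cfg S. Mst n k x y * reduced (code n) k S y x)
      = (\<Sum>x\<in>cfg S. if x = restr S w then (if dec n x = k then 1 else 0) else 0)"
  proof (rule sum.cong)
    fix x assume x: "x \<in> cfg S"
    have "(\<Sum>y\<in>cfg S. Mst n k x y * reduced (code n) k S y x) = (\<Sum>y\<in>cfg S. if x = y then (if dec n x = k then reduced (code n) k S x x else 0) else 0)"
      by (rule sum.cong) (auto simp: Mst_def)
    also have "\<dots> = (if x = restr S w then (if dec n x = k then 1 else 0) else 0)"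
      using x rho[OF x] by (auto simp: sum.delta finite_cfg[OF fS])
    finally show "(\<Sum>y\<in>cfg S. Mst n k x y * reduced (code n) k S y x) = (if x = restr S w then (if dec n x = k then 1 else 0) else 0)" .
  qed simp
  also have "\<dots> = (if dec n (restr S w) = k then 1 else 0)"
    using rS by (simp add: sum.delta' finite_cfg[OF fS])
  finally show ?thesis unfolding outcome_prob_def w_def by simp
qed

lemma good:
  assumes "S \<subseteq> {..<2*n}" "\<not> S \<subseteq> {n..<2*n}" "\<not> S \<subseteq> {..<n}"
  shows "dec n (restr S (word n k)) = k"
proof -
  obtain i where i: "i \<in> S" "i < n" using assms(1,2) by fastforce
  obtain j where j: "j \<in> S" "n \<le> j" "j < 2*n" using assms(1,3) by fastforce
  show ?thesis using i j assms(1) unfolding dec_def restr_def word_def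
    by (cases k) auto
qed

lemma sum_pow_sub:
  fixes e :: real
  assumes B: "B \<subseteq> {..<2*n}" "card B = n"
  shows "(\<Sum>S\<in>Pow {..<2*n}. if S \<subseteq> B then loss_prob (2*n) e S else 0) = e^n"
proof -
  have fB: "finite B" using B finite_subset by auto
  have "(\<Sum>S\<in>Pow {..<2*n}. if S \<subseteq> B then loss_prob (2*n) e S else 0)
      = (\<Sum>S\<in>{S\<in>Pow {..<2*n}. S \<subseteq> B}. loss_prob (2*n) e S)"
    by (rule sum.inter_filter[symmetric]) simp
  also have "{S\<in>Pow {..<2*n}. S \<subseteq> B} = Pow B" using B by auto
  also have "(\<Sum>S\<in>Pow B. loss_prob (2*n) e S) = (\<Sum>S\<in>Pow B. e^n * ((1-e)^card S * e^(card B - card S)))"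
  proof (rule sum.cong)
    fix S assume "S \<in> Pow B"
    then have "card S \<le> n" using B fB card_mono by fastforce
    then have "2*n - card S = n + (n - card S)" by simp
    then show "loss_prob (2*n) e S = e^n * ((1-e)^card S * e^(card B - card S))"
      unfolding loss_prob_def B(2) by (simp add: power_add)
  qed simp
  also have "\<dots> = e^n" using binom_pow[OF fB, of e] by (simp flip: sum_distrib_left)
  finally show ?thesis .
qed

lemma succ_code:
  fixes e :: real
  assumes n: "n \<ge> 1" and e: "0 \<le> e" "e \<le> 1"
  shows "(\<Sum>S\<in>Pow {..<2*n}. loss_prob (2*n) e S *
            outcome_prob S (Mst n k) (reduced (code n) k S)) \<ge> 1 - 2 * e^n"
proof -
  define U where "U = {..<2*n}"
  have lp0: "loss_prob (2*n) e S \<ge> 0" for S unfolding loss_prob_def using e by simp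
  have "(\<Sum>S\<in>Pow U. loss_prob (2*n) e S *
            outcome_prob S (Mst n k) (reduced (code n) k S))
     \<ge> (\<Sum>S\<in>Pow U. loss_prob (2*n) e S - (if S \<subseteq> {n..<2*n} then loss_prob (2*n) e S else 0)
            - (if S \<subseteq> {..<n} then loss_prob (2*n) e S else 0))"
  proof (rule sum_mono)
    fix S assume S: "S \<in> Pow U"
    then have S': "S \<subseteq> {..<2*n}" unfolding U_def by auto
    show "loss_prob (2*n) e S - (if S \<subseteq> {n..<2*n} then loss_prob (2*n) e S else 0)
            - (if S \<subseteq> {..<n} then loss_prob (2*n) e S else 0) \<le> loss_prob (2*n) e S *
            outcome_prob S (Mst n k) (reduced (code n) k S)"
      unfolding outcome_code[OF n S'] using good[OF S', of k] lp0[of S] by auto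
  qed
  also have "(\<Sum>S\<in>Pow U. loss_prob (2*n) e S - (if S \<subseteq> {n..<2*n} then loss_prob (2*n) e S else 0)
            - (if S \<subseteq> {..<n} then loss_prob (2*n) e S else 0))
      = (\<Sum>S\<in>Pow U. loss_prob (2*n) e S) - (\<Sum>S\<in>Pow U. if S \<subseteq> {n..<2*n} then loss_prob (2*n) e S else 0)
          - (\<Sum>S\<in>Pow U. if S \<subseteq> {..<n} then loss_prob (2*n) e S else 0)"
    by (simp add: sum_subtractf)
  also have "(\<Sum>S\<in>Pow U. loss_prob (2*n) e S) = 1"
    using binom_pow[of U e] unfolding U_def loss_prob_def by simp
  also have "(\<Sum>S\<in>Pow U. if S \<subseteq> {n..<2*n} then loss_prob (2*n) e S else 0) = e^n"
    unfolding U_def by (rule sum_pow_sub) auto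
  also have "(\<Sum>S\<in>Pow U. if S \<subseteq> {..<n} then loss_prob (2*n) e S else 0) = e^n"
    unfolding U_def by (rule sum_pow_sub) auto
  finally show ?thesis unfolding U_def by simp
qed

lemma bsm_code:
  fixes e :: real
  assumes n: "n \<ge> 1" and e: "0 \<le> e" "e \<le> 1" and small: "2 * e^n < d"
  shows "bsm_succeeds_gt (code n) e (1 - d)"
  unfolding bsm_succeeds_gt_def
proof (intro exI[of _ "\<lambda>S. Mst n"] conjI allI impI)
  fix S assume "S \<subseteq> {..<fst (code n)}"
  then have "finite S" by (auto simp: code_def finite_subset)
  then show "povm_on S (Mst n)" by (rule povm_Mst)
next
  fix k
  show "1 - d < (\<Sum>S\<in>Pow {..<fst (code n)}. loss_prob (fst (code n)) e S *
            outcome_prob S (Mst n k) (reduced (code n) k S))"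
    using succ_code[OF n e, of k] small by (simp add: code_def)
qed

theorem lemma3:
  shows "(\<forall>F. (\<forall>C\<in>F. is_code C) \<longrightarrow> bsm_threshold F \<le> 1) \<and>
         (\<exists>F. (\<forall>C\<in>F. is_code C \<and> (\<exists>n\<ge>1. fst C = 2 * n)) \<and>
              (\<forall>eps. 0 \<le> eps \<and> eps < 1 \<longrightarrow>
                 (\<forall>eps'>0. \<exists>C\<in>F. bsm_succeeds_gt C eps (1 - eps'))) \<and>
              bsm_threshold F = 1)"
proof (intro conjI allI impI)
  fix F :: "code set" assume "\<forall>C\<in>F. is_code C"
  then show "bsm_threshold F \<le> 1" by (rule part1)
next
  define F where "F = code ` {n. n \<ge> 1}"
  have codes: "\<forall>C\<in>F. is_code C \<and> (\<exists>n\<ge>1. fst C = 2 * n)"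
    unfolding F_def using is_code_code by (auto simp: code_def)
  have succ: "\<forall>eps. 0 \<le> eps \<and> eps < 1 \<longrightarrow>
                 (\<forall>eps'>0. \<exists>C\<in>F. bsm_succeeds_gt C eps (1 - eps'))"
  proof (intro allI impI)
    fix eps eps' :: real assume e: "0 \<le> eps \<and> eps < 1" and d: "eps' > 0"
    obtain m where m: "eps^m < eps'/2" using real_arch_pow_inv[of "eps'/2" eps] d e by auto
    have "eps^(Suc m) \<le> eps^m" using e by (intro power_decreasing) auto
    then have "2 * eps^(Suc m) < eps'" using m by simp
    then have "bsm_succeeds_gt (code (Suc m)) eps (1 - eps')"
      using e by (intro bsm_code) auto
    moreover have "code (Suc m) \<in> F" unfolding F_def by simp
    ultimately show "\<exists>C\<in>F. bsm_succeeds_gt C eps (1 - eps')" by blast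
  qed
  have "bsm_threshold F = 1"
    unfolding bsm_threshold_def
  proof (rule cSup_eq_maximum)
    show "1 \<in> {e. \<forall>eps. 0 \<le> eps \<and> eps \<le> 1 \<and> eps < e \<longrightarrow>
       (\<forall>eps'>0. \<exists>C\<in>F. bsm_succeeds_gt C eps (1 - eps'))}"
      using succ by auto
  next
    fix x assume "x \<in> {e. \<forall>eps. 0 \<le> eps \<and> eps \<le> 1 \<and> eps < e \<longrightarrow>
       (\<forall>eps'>0. \<exists>C\<in>F. bsm_succeeds_gt C eps (1 - eps'))}"
    then show "x \<le> 1" using E_bound codes by blast
  qed
  then show "\<exists>F. (\<forall>C\<in>F. is_code C \<and> (\<exists>n\<ge>1. fst C = 2 * n)) \<and>
              (\<forall>eps. 0 \<le> eps \<and> eps < 1 \<longrightarrow>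
                 (\<forall>eps'>0. \<exists>C\<in>F. bsm_succeeds_gt C eps (1 - eps'))) \<and>
              bsm_threshold F = 1"
    using codes succ by blast
qed

end
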